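(* Consider problem (P) and suppose Assumptions A and B hold. Let $\{x^t\}$ be generated by SCP$_{ls}$ and, for each $t$, let $\lambda^t\in\mathbb R^m_+$ be a Lagrange multiplier of the subproblem at iteration $t$ with $(\tilde L_f,\tilde L_g)=(L_f^t,L_g^t)$. Then $\{\lambda^t\}$ is bounded, and every accumulation point of $\{x^t\}$ is a stationary point of (P).
   Context: Problem (P): $\min_{x\in\mathbb R^n}F(x):=f(x)+P_1(x)-P_2(x)+\delta_{\{g\le 0\}}(x)$, where $f:\mathbb R^n\to\mathbb R$ is continuously differentiable, $P_1,P_2:\mathbb R^n\to\mathbb R$ are convex and continuous, $g=(g_1,\dots,g_m):\mathbb R^n\to\mathbb R^m$ is continuous with $\{x:g(x)\le0\}\neq\emptyset$ (componentwise inequalities), $\delta_C$ the indicator function of $C$. Assumption A: (i) $\nabla f$ is Lipschitz with modulus $L_f$; (ii) each $g_i$ is differentiable with $\nabla g_i$ Lipschitz with modulus $L_{g_i}$; (iii) $F$ is level-bounded. Assumption B (MFCQ): each $g_i$ is continuously differentiable and for every $x$ with $g(x)\le0$ there is $d$ with $\langle\nabla g_i(x),d\rangle<0$ for all $i\in I(x):=\{j:g_j(x)=0\}$. Stationary point: $x$ is a stationary point of (P) if there exists $\lambda\in\mathbb R^m_+$ with $g(x)\le0$, $\lambda_ig_i(x)=0$ for all $i$, and $0\in\nabla f(x)+\partial P_1(x)-\partial P_2(x)+\sum_{i=1}^m\lambda_i\nabla g_i(x)$ (convex subdifferentials). $\bar G(x,y,w)\in\mathbb R^m$ has components $\bar G_i(x,y,w)=g_i(y)+\langle\nabla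 g_i(y),x-y\rangle+\frac{w_i}{2}\|x-y\|^2$. Algorithm SCP$_{ls}$: fix $c>0$, $0<\underline L<\bar L$, $\tau>1$ and $x^0$ with $g(x^0)\le0$. For $t=0,1,2,\dots$: (1) pick any $\xi^t\in\partial P_2(x^t)$; (2) choose $L_f^{t,0}\in[\underline L,\bar L]$, $L_g^{t,0}\in[\underline L,\bar L]^m$ arbitrarily, set $\tilde L_f=L_f^{t,0}$, $\tilde L_g=L_g^{t,0}$; (3) compute $\tilde x$ solving: minimize $\langle\nabla f(x^t)-\xi^t,x-x^t\rangle+\frac{\tilde L_f}{2}\|x-x^t\|^2+P_1(x)$ subject to $\bar G(x,x^t,\tilde L_g)\le0$. If $g(\tilde x)\le0$ and $F(\tilde x)\le F(x^t)-\frac c2\|\tilde x-x^t\|^2$, set $x^{t+1}=\tilde x$, $L_f^t=\tilde L_f$, $L_g^t=\tilde L_g$ and go to iteration $t+1$; otherwise, if $g(\tilde x)\not\le0$ replace $\tilde L_g$ by $\tau\tilde L_g$, while if $g(\tilde x)\le0$ but the decrease inequality fails replace $\tilde L_f$ by $\tau\tilde L_f$, and repeat step (3). A Lagrange multiplier of the subproblem at iteration $t$ with $(L_f^t,L_g^t)$ is a vector $\lambda\in\mathbb R^m_+$ such that $x^{t+1}$ minimizes $x\mapsto\langle\nabla f(x^t)-\xi^t,x-x^t\rangle+\frac{L_f^t}{2}\|x-x^t\|^2+P_1(x)+\langle\lambda,\bar G(x,x^t,L_g^t)\rangle$ and $\lambda_i\bar G_i(x^{t+1},x^t,L_g^t)=0$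 for all $i$ (such multipliers exist under Assumptions A and B). *)

theory Defs
  imports "HOL-Analysis.Analysis"
begin

definition subdiff :: "('a::euclidean_space \<Rightarrow> real) \<Rightarrow> 'a \<Rightarrow> 'a set" where
  "subdiff P x = {v. \<forall>y. P y \<ge> P x + v \<bullet> (y - x)}"

definition feasible :: "(nat \<Rightarrow> 'a \<Rightarrow> real) \<Rightarrow> nat \<Rightarrow> 'a \<Rightarrow> bool" where
  "feasible g m x = (\<forall>i<m. g i x \<le> 0)"

definition Gbar :: "(nat \<Rightarrow> 'a::euclidean_space \<Rightarrow> real) \<Rightarrow> (nat \<Rightarrow> 'a \<Rightarrow> 'a) \<Rightarrow> nat
    \<Rightarrow> 'a \<Rightarrow> 'a \<Rightarrow> (nat \<Rightarrow> real) \<Rightarrow> real" where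
  "Gbar g gradg i x y w = g i y + gradg i y \<bullet> (x - y) + w i / 2 * (norm (x - y))\<^sup>2"

definition subobj :: "('a::euclidean_space \<Rightarrow> 'a) \<Rightarrow> ('a \<Rightarrow> real) \<Rightarrow> 'a \<Rightarrow> 'a \<Rightarrow> real \<Rightarrow> 'a \<Rightarrow> real" where
  "subobj gradf P1 y xi Lf x = (gradf y - xi) \<bullet> (x - y) + Lf / 2 * (norm (x - y))\<^sup>2 + P1 x"

definition solves_sub :: "('a::euclidean_space \<Rightarrow> 'a) \<Rightarrow> ('a \<Rightarrow> real) \<Rightarrow> (nat \<Rightarrow> 'a \<Rightarrow> real)
    \<Rightarrow> (nat \<Rightarrow> 'a \<Rightarrow> 'a) \<Rightarrow> nat \<Rightarrow> 'a \<Rightarrow> 'a \<Rightarrow> real \<Rightarrow> (nat \<Rightarrow> real) \<Rightarrow> 'a \<Rightarrow> bool" where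
  "solves_sub gradf P1 g gradg m y xi Lf Lg z =
     ((\<forall>i<m. Gbar g gradg i z y Lg \<le> 0) \<and>
      (\<forall>x. (\<forall>i<m. Gbar g gradg i x y Lg \<le> 0) \<longrightarrow>
            subobj gradf P1 y xi Lf z \<le> subobj gradf P1 y xi Lf x))"

text \<open>One outer iteration of SCP_ls (including the full line search):
  from iterate y with subgradient xi, the algorithm produces the next iterate ynext with
  accepted parameters (Lf, Lg).\<close>
definition scp_ls_step ::
  "('a::euclidean_space \<Rightarrow> real) \<Rightarrow> ('a \<Rightarrow> 'a) \<Rightarrow> ('a \<Rightarrow> real) \<Rightarrow> ('a \<Rightarrow> real)
   \<Rightarrow> (nat \<Rightarrow> 'a \<Rightarrow> real) \<Rightarrow> (nat \<Rightarrow> 'a \<Rightarrow> 'a) \<Rightarrow> nat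
   \<Rightarrow> real \<Rightarrow> real \<Rightarrow> real \<Rightarrow> real
   \<Rightarrow> 'a \<Rightarrow> 'a \<Rightarrow> real \<Rightarrow> (nat \<Rightarrow> real) \<Rightarrow> 'a \<Rightarrow> bool" where
  "scp_ls_step f gradf P1 P2 g gradg m c Llo Lhi \<tau> y xi Lf Lg ynext =
   (let F = (\<lambda>x. f x + P1 x - P2 x);
        accept = (\<lambda>z. feasible g m z \<and> F z \<le> F y - c / 2 * (norm (z - y))\<^sup>2)
    in \<exists>(K::nat) (Lft::nat \<Rightarrow> real) (Lgt::nat \<Rightarrow> nat \<Rightarrow> real) (z::nat \<Rightarrow> 'a).
      Llo \<le> Lft 0 \<and> Lft 0 \<le> Lhi \<and> (\<forall>i<m. Llo \<le> Lgt 0 i \<and> Lgt 0 i \<le> Lhi) \<and>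
      (\<forall>j\<le>K. solves_sub gradf P1 g gradg m y xi (Lft j) (Lgt j) (z j)) \<and>
      (\<forall>j<K. \<not> accept (z j) \<and>
          (if \<not> feasible g m (z j)
           then Lgt (Suc j) = (\<lambda>i. \<tau> * Lgt j i) \<and> Lft (Suc j) = Lft j
           else Lft (Suc j) = \<tau> * Lft j \<and> Lgt (Suc j) = Lgt j)) \<and>
      accept (z K) \<and> ynext = z K \<and> Lf = Lft K \<and> Lg = Lgt K)"

definition sub_multiplier ::
  "('a::euclidean_space \<Rightarrow> 'a) \<Rightarrow> ('a \<Rightarrow> real) \<Rightarrow> (nat \<Rightarrow> 'a \<Rightarrow> real) \<Rightarrow> (nat \<Rightarrow> 'a \<Rightarrow> 'a) \<Rightarrow> nat
   \<Rightarrow> 'a \<Rightarrow> 'a \<Rightarrow> real \<Rightarrow> (nat \<Rightarrow> real) \<Rightarrow> 'a \<Rightarrow> (nat \<Rightarrow> real) \<Rightarrow> bool" where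
  "sub_multiplier gradf P1 g gradg m y xi Lf Lg z lam =
     ((\<forall>i<m. lam i \<ge> 0) \<and>
      (\<forall>x. subobj gradf P1 y xi Lf z + (\<Sum>i<m. lam i * Gbar g gradg i z y Lg)
           \<le> subobj gradf P1 y xi Lf x + (\<Sum>i<m. lam i * Gbar g gradg i x y Lg)) \<and>
      (\<forall>i<m. lam i * Gbar g gradg i z y Lg = 0))"

definition stationary ::
  "('a::euclidean_space \<Rightarrow> 'a) \<Rightarrow> ('a \<Rightarrow> real) \<Rightarrow> ('a \<Rightarrow> real)
   \<Rightarrow> (nat \<Rightarrow> 'a \<Rightarrow> real) \<Rightarrow> (nat \<Rightarrow> 'a \<Rightarrow> 'a) \<Rightarrow> nat \<Rightarrow> 'a \<Rightarrow> bool" where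
  "stationary gradf P1 P2 g gradg m x =
     (feasible g m x \<and>
      (\<exists>lam::nat \<Rightarrow> real. (\<forall>i<m. lam i \<ge> 0 \<and> lam i * g i x = 0) \<and>
         (\<exists>u\<in>subdiff P1 x. \<exists>v\<in>subdiff P2 x.
            gradf x + u - v + (\<Sum>i<m. lam i *\<^sub>R gradg i x) = 0)))"

end

theory Submission
  imports Defs "HOL-Analysis.Analysis"
begin

lemma descent:
  fixes h :: "'a::euclidean_space \<Rightarrow> real" and gh :: "'a \<Rightarrow> 'a"
  assumes hd: "\<And>y. (h has_derivative (\<lambda>v. gh y \<bullet> v)) (at y)"
    and lip: "\<And>y z. norm (gh y - gh z) \<le> L * norm (y - z)"
  shows "h z \<le> h y + gh y \<bullet> (z - y) + L / 2 * (norm (z - y))\<^sup>2"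
proof -
  define d where "d = z - y"
  define \<psi> where "\<psi> s = h (y + s *\<^sub>R d) - s * (gh y \<bullet> d) - L / 2 * s\<^sup>2 * (norm d)\<^sup>2" for s :: real
  have der: "(\<psi> has_real_derivative (gh (y + s *\<^sub>R d) \<bullet> d - gh y \<bullet> d - L * s * (norm d)\<^sup>2)) (at s)" for s
  proof -
    have l: "((\<lambda>s. y + s *\<^sub>R d) has_derivative (\<lambda>s. s *\<^sub>R d)) (at s)"
      by (auto intro!: derivative_eq_intros)
    have c: "((\<lambda>s. h (y + s *\<^sub>R d)) has_derivative (\<lambda>u. gh (y + s *\<^sub>R d) \<bullet> (u *\<^sub>R d))) (at s)"
      using has_derivative_compose[OF l hd] by (simp add: o_def)
    have c2: "((\<lambda>s. h (y + s *\<^sub>R d)) has_real_derivative (gh (y + s *\<^sub>R d) \<bullet> d)) (at s)"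
      unfolding has_field_derivative_def using c by (simp add: mult.commute[of _ "gh _ \<bullet> d"])
    have q: "((\<lambda>s. s * (gh y \<bullet> d) + L / 2 * s\<^sup>2 * (norm d)\<^sup>2) has_real_derivative
        (gh y \<bullet> d + L * s * (norm d)\<^sup>2)) (at s)"
      by (auto intro!: derivative_eq_intros simp: algebra_simps power2_eq_square)
    have "\<psi> = (\<lambda>s. h (y + s *\<^sub>R d) - (s * (gh y \<bullet> d) + L / 2 * s\<^sup>2 * (norm d)\<^sup>2))"
      unfolding \<psi>_def by (auto simp: fun_eq_iff)
    then show ?thesis using DERIV_diff[OF c2 q] by (simp add: algebra_simps)
  qed
  have "\<psi> 1 \<le> \<psi> 0"
  proof (rule DERIV_nonpos_imp_nonincreasing[where f=\<psi>])
    fix s :: real assume s: "0 \<le> s" "s \<le> 1"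
    have "(gh (y + s *\<^sub>R d) - gh y) \<bullet> d \<le> norm (gh (y + s *\<^sub>R d) - gh y) * norm d"
      by (rule norm_cauchy_schwarz)
    also have "\<dots> \<le> L * norm (s *\<^sub>R d) * norm d"
      using lip[of "y + s *\<^sub>R d" y] by (simp add: mult_right_mono)
    also have "\<dots> = L * s * (norm d)\<^sup>2" using s by (simp add: power2_eq_square)
    finally show "\<exists>y. DERIV \<psi> s :> y \<and> y \<le> 0"
      using der[of s] by (intro exI[of _ "gh (y + s *\<^sub>R d) \<bullet> d - gh y \<bullet> d - L * s * (norm d)\<^sup>2"])
         (simp add: inner_diff_left)
  qed simp
  then show ?thesis unfolding \<psi>_def d_def by simp
qed
lemma decrease:
  fixes f P1 P2 :: "'a::euclidean_space \<Rightarrow> real" and gradf :: "'a \<Rightarrow> 'a"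
  assumes fd: "\<And>y. (f has_derivative (\<lambda>h. gradf y \<bullet> h)) (at y)"
    and lip: "\<And>y z. norm (gradf y - gradf z) \<le> L * norm (y - z)"
    and yf: "feasible g m y" and xi: "xi \<in> subdiff P2 y"
    and sol: "solves_sub gradf P1 g gradg m y xi Lfv Lgv z"
    and big: "Lfv \<ge> L + c"
  shows "f z + P1 z - P2 z \<le> f y + P1 y - P2 y - c / 2 * (norm (z - y))\<^sup>2"
proof -
  have "\<forall>i<m. Gbar g gradg i y y Lgv \<le> 0"
    using yf by (simp add: Gbar_def feasible_def)
  then have "subobj gradf P1 y xi Lfv z \<le> subobj gradf P1 y xi Lfv y"
    using sol by (simp add: solves_sub_def)
  then have s: "(gradf y - xi) \<bullet> (z - y) + Lfv / 2 * (norm (z - y))\<^sup>2 + P1 z \<le> P1 y"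
    by (simp add: subobj_def)
  have d: "f z \<le> f y + gradf y \<bullet> (z - y) + L / 2 * (norm (z - y))\<^sup>2"
    by (rule descent[OF fd lip])
  have p: "P2 z \<ge> P2 y + xi \<bullet> (z - y)"
    using xi by (simp add: subdiff_def)
  have "Lfv / 2 * (norm (z - y))\<^sup>2 \<ge> (L + c) / 2 * (norm (z - y))\<^sup>2"
    using big by (intro mult_right_mono) auto
  then show ?thesis using s d p by (simp add: inner_diff_left algebra_simps)
qed


definition accF :: "('a \<Rightarrow> real) \<Rightarrow> ('a::euclidean_space \<Rightarrow> real) \<Rightarrow> ('a \<Rightarrow> real) \<Rightarrow> (nat \<Rightarrow> 'a \<Rightarrow> real) \<Rightarrow> nat \<Rightarrow> real \<Rightarrow> 'a \<Rightarrow> 'a \<Rightarrow> bool" where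
  "accF f P1 P2 g m c y z = (feasible g m z \<and> f z + P1 z - P2 z \<le> f y + P1 y - P2 y - c / 2 * (norm (z - y))\<^sup>2)"

lemma scp_ls_step_alt:
  fixes y :: "'a::euclidean_space"
  shows "scp_ls_step f gradf P1 P2 g gradg m c Llo Lhi \<tau> y xi Lf Lg ynext =
   (\<exists>(K::nat) (Lft::nat \<Rightarrow> real) (Lgt::nat \<Rightarrow> nat \<Rightarrow> real) (z::nat \<Rightarrow> 'a).
      Llo \<le> Lft 0 \<and> Lft 0 \<le> Lhi \<and> (\<forall>i<m. Llo \<le> Lgt 0 i \<and> Lgt 0 i \<le> Lhi) \<and>
      (\<forall>j\<le>K. solves_sub gradf P1 g gradg m y xi (Lft j) (Lgt j) (z j)) \<and>
      (\<forall>j<K. \<not> accF f P1 P2 g m c y (z j) \<and>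
          (if \<not> feasible g m (z j)
           then Lgt (Suc j) = (\<lambda>i. \<tau> * Lgt j i) \<and> Lft (Suc j) = Lft j
           else Lft (Suc j) = \<tau> * Lft j \<and> Lgt (Suc j) = Lgt j)) \<and>
      accF f P1 P2 g m c y (z K) \<and> ynext = z K \<and> Lf = Lft K \<and> Lg = Lgt K)"
  unfolding scp_ls_step_def accF_def Let_def by (rule refl)

lemma step_analysis:
  fixes f P1 P2 :: "'a::euclidean_space \<Rightarrow> real" and gradf :: "'a \<Rightarrow> 'a"
  assumes fd: "\<And>y. (f has_derivative (\<lambda>h. gradf y \<bullet> h)) (at y)"
    and lip: "\<And>y z. norm (gradf y - gradf z) \<le> L0 * norm (y - z)" and L0: "L0 \<ge> 0"
    and gd: "\<And>i y. i < m \<Longrightarrow> (g i has_derivative (\<lambda>h. gradg i y \<bullet> h)) (at y)"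
    and lipg: "\<And>i y z. i < m \<Longrightarrow> norm (gradg i y - gradg i z) \<le> Lgi i * norm (y - z)"
    and Lgmax: "\<And>i. i < m \<Longrightarrow> Lgi i \<le> Lgmax"
    and c: "c > 0" and Llo: "0 < Llo" and LL: "Llo < Lhi" and tau: "\<tau> > 1"
    and yf: "feasible g m y" and xi: "xi \<in> subdiff P2 y"
    and st: "scp_ls_step f gradf P1 P2 g gradg m c Llo Lhi \<tau> y xi Lfv Lgv z"
  shows "feasible g m z \<and> f z + P1 z - P2 z \<le> f y + P1 y - P2 y - c / 2 * (norm (z - y))\<^sup>2
     \<and> Llo \<le> Lfv \<and> Lfv \<le> max Lhi (\<tau> * (L0 + c))
     \<and> (\<forall>i<m. Llo \<le> Lgv i \<and> Lgv i \<le> max Lhi (\<tau> * Lgmax * Lhi / Llo))"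
proof -
  define F where "F = (\<lambda>x. f x + P1 x - P2 x)"
  define accept where "accept = accF f P1 P2 g m c y"
  obtain K Lft Lgt zz where
    h0: "Llo \<le> Lft 0" "Lft 0 \<le> Lhi" "\<forall>i<m. Llo \<le> Lgt 0 i \<and> Lgt 0 i \<le> Lhi"
    and hs: "\<forall>j\<le>K. solves_sub gradf P1 g gradg m y xi (Lft j) (Lgt j) (zz j)"
    and hr: "\<forall>j<K. \<not> accept (zz j) \<and>
          (if \<not> feasible g m (zz j)
           then Lgt (Suc j) = (\<lambda>i. \<tau> * Lgt j i) \<and> Lft (Suc j) = Lft j
           else Lft (Suc j) = \<tau> * Lft j \<and> Lgt (Suc j) = Lgt j)"
    and ha: "accept (zz K)" "z = zz K" "Lfv = Lft K" "Lgv = Lgt K"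
    using st unfolding scp_ls_step_alt accept_def[symmetric] by blast
  have inv: "j \<le> K \<longrightarrow> Llo \<le> Lft j \<and> Lft j \<le> max Lhi (\<tau> * (L0 + c)) \<and>
     (\<exists>\<rho>\<ge>1. (\<forall>i<m. Lgt j i = \<rho> * Lgt 0 i) \<and> (\<rho> = 1 \<or> \<rho> * Llo < \<tau> * Lgmax))" for j
  proof (induction j)
    case 0
    then show ?case using h0 by (auto intro!: exI[of _ 1])
  next
    case (Suc j)
    show ?case
    proof
      assume jK: "Suc j \<le> K"
      then have jK': "j < K" by simp
      from Suc jK obtain \<rho> where IH: "Llo \<le> Lft j" "Lft j \<le> max Lhi (\<tau> * (L0 + c))"
        "\<rho> \<ge> 1" "\<forall>i<m. Lgt j i = \<rho> * Lgt 0 i" "\<rho> = 1 \<or> \<rho> * Llo < \<tau> * Lgmax" by auto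
      have sol: "solves_sub gradf P1 g gradg m y xi (Lft j) (Lgt j) (zz j)" using hs jK' by auto
      have na: "\<not> accept (zz j)" using hr jK' by auto
      show "Llo \<le> Lft (Suc j) \<and> Lft (Suc j) \<le> max Lhi (\<tau> * (L0 + c)) \<and>
        (\<exists>\<rho>\<ge>1. (\<forall>i<m. Lgt (Suc j) i = \<rho> * Lgt 0 i) \<and> (\<rho> = 1 \<or> \<rho> * Llo < \<tau> * Lgmax))"
      proof (cases "feasible g m (zz j)")
        case False
        then have upd: "Lgt (Suc j) = (\<lambda>i. \<tau> * Lgt j i)" "Lft (Suc j) = Lft j"
          using hr jK' by auto
        from False obtain i where i: "i < m" "g i (zz j) > 0" by (auto simp: feasible_def not_le)
        have G: "Gbar g gradg i (zz j) y (Lgt j) \<le> 0" using sol i by (simp add: solves_sub_def)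
        have "Lgt j i < Lgi i"
        proof (rule ccontr)
          assume "\<not> Lgt j i < Lgi i"
          then have le: "Lgi i / 2 * (norm (zz j - y))\<^sup>2 \<le> Lgt j i / 2 * (norm (zz j - y))\<^sup>2"
            by (intro mult_right_mono) auto
          have "g i (zz j) \<le> g i y + gradg i y \<bullet> (zz j - y) + Lgi i / 2 * (norm (zz j - y))\<^sup>2"
            by (rule descent[OF gd[OF i(1)] lipg[OF i(1)]])
          with le G i show False by (simp add: Gbar_def)
        qed
        then have "\<rho> * Lgt 0 i < Lgmax" using IH(4) i Lgmax[OF i(1)] by auto
        moreover have "\<rho> * Llo \<le> \<rho> * Lgt 0 i" using IH(3) h0(3) i by auto
        ultimately have "\<rho> * Llo < Lgmax" by linarith
        then have "(\<tau> * \<rho>) * Llo < \<tau> * Lgmax" using tau by (simp add: mult.assoc)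
        moreover have "1 * 1 \<le> \<tau> * \<rho>" using tau IH(3) by (intro mult_mono) auto
        ultimately show ?thesis using IH upd by (intro conjI exI[of _ "\<tau> * \<rho>"]) auto
      next
        case True
        then have upd: "Lft (Suc j) = \<tau> * Lft j" "Lgt (Suc j) = Lgt j" using hr jK' by auto
        have "Lft j < L0 + c"
        proof (rule ccontr)
          assume "\<not> Lft j < L0 + c"
          then have "F (zz j) \<le> F y - c / 2 * (norm (zz j - y))\<^sup>2"
            unfolding F_def by (intro decrease[OF fd lip yf xi sol]) auto
          with True na show False by (simp add: accept_def accF_def F_def)
        qed
        then have "\<tau> * Lft j \<le> \<tau> * (L0 + c)" using tau by auto
        moreover have "Llo \<le> \<tau> * Lft j"
        proof -
          have "1 * Lft j \<le> \<tau> * Lft j" using IH(1) tau Llo by (intro mult_right_mono) auto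
          then show ?thesis using IH(1) by simp
        qed
        ultimately show ?thesis using IH upd by auto
      qed
    qed
  qed
  from inv[of K] obtain \<rho> where I: "Llo \<le> Lft K" "Lft K \<le> max Lhi (\<tau> * (L0 + c))"
    "\<rho> \<ge> 1" "\<forall>i<m. Lgt K i = \<rho> * Lgt 0 i" "\<rho> = 1 \<or> \<rho> * Llo < \<tau> * Lgmax" by auto
  have "Llo \<le> Lgt K i \<and> Lgt K i \<le> max Lhi (\<tau> * Lgmax * Lhi / Llo)" if i: "i < m" for i
  proof -
    have e: "Lgt K i = \<rho> * Lgt 0 i" and b: "Llo \<le> Lgt 0 i" "Lgt 0 i \<le> Lhi" using I(4) h0(3) i by auto
    have "1 * Lgt 0 i \<le> \<rho> * Lgt 0 i" using b I(3) Llo by (intro mult_right_mono) auto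
    then have "Llo \<le> \<rho> * Lgt 0 i" using b by simp
    moreover have "\<rho> * Lgt 0 i \<le> max Lhi (\<tau> * Lgmax * Lhi / Llo)"
    proof (cases "\<rho> = 1")
      case True then show ?thesis using b by simp
    next
      case False
      then have r: "\<rho> < \<tau> * Lgmax / Llo" using I(5) Llo by (simp add: field_simps)
      have "\<rho> * Lgt 0 i \<le> \<rho> * Lhi" using b I(3) by auto
      also have "\<dots> \<le> (\<tau> * Lgmax / Llo) * Lhi" using r LL Llo by (intro mult_right_mono) auto
      finally show ?thesis by simp
    qed
    ultimately show ?thesis using e by simp
  qed
  then have gb: "\<forall>i<m. Llo \<le> Lgv i \<and> Lgv i \<le> max Lhi (\<tau> * Lgmax * Lhi / Llo)"
    using ha(4) by simp
  have acc: "feasible g m z \<and> f z + P1 z - P2 z \<le> f y + P1 y - P2 y - c / 2 * (norm (z - y))\<^sup>2"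
    using ha(1,2) unfolding accept_def accF_def by simp
  show ?thesis using acc gb I(1,2) ha(3) by blast
qed


lemma cont_comp:
  assumes "continuous_on UNIV h" "(s \<longlongrightarrow> l) F"
  shows "((\<lambda>k. h (s k)) \<longlongrightarrow> h l) F"
  by (rule continuous_on_tendsto_compose[OF assms(1) assms(2)]) auto

lemma cont_bound:
  fixes h :: "'a::euclidean_space \<Rightarrow> real"
  assumes "continuous_on UNIV h"
  shows "\<exists>B. \<forall>y. norm y \<le> R \<longrightarrow> \<bar>h y\<bar> \<le> B"
proof -
  have "compact (h ` cball 0 R)"
    by (rule compact_continuous_image[OF continuous_on_subset[OF assms] compact_cball]) auto
  then have "bounded (h ` cball 0 R)" by (rule compact_imp_bounded)
  then obtain B where "\<forall>v\<in>h ` cball 0 R. norm v \<le> B" by (auto simp: bounded_iff)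
  then show ?thesis by (intro exI[of _ B]) auto
qed

lemma lip_cont:
  fixes h :: "'a::euclidean_space \<Rightarrow> 'b::real_normed_vector"
  assumes "\<And>y z. norm (h y - h z) \<le> L * norm (y - z)"
  shows "continuous_on UNIV h"
proof -
  have "norm (h y - h z) \<le> max L 0 * norm (y - z)" for y z
    using assms[of y z] by (metis max.cobounded1 mult_right_mono norm_ge_zero order.trans)
  then have "(max L 0)-lipschitz_on UNIV h"
    by (intro lipschitz_onI) (auto simp: dist_norm)
  then show ?thesis by (rule lipschitz_on_continuous_on)
qed

lemma subgrad_bound:
  fixes P :: "'a::euclidean_space \<Rightarrow> real"
  assumes xi: "xi \<in> subdiff P y" and y: "norm y \<le> R"
    and B: "\<And>z. norm z \<le> R + 1 \<Longrightarrow> \<bar>P z\<bar> \<le> B"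
  shows "norm xi \<le> 2 * B"
proof (cases "xi = 0")
  case True
  have "\<bar>P y\<bar> \<le> B" using B y by auto
  then show ?thesis using True by simp
next
  case False
  define u where "u = xi /\<^sub>R norm xi"
  have nu: "norm u = 1" using False by (simp add: u_def)
  have "\<forall>z. P z \<ge> P y + xi \<bullet> (z - y)" using xi by (simp add: subdiff_def)
  then have "P (y + u) \<ge> P y + xi \<bullet> (y + u - y)" by blast
  moreover have "xi \<bullet> u = norm xi"
    using False by (simp add: u_def inner_commute power2_norm_eq_inner[symmetric] power2_eq_square)
  moreover have "\<bar>P (y + u)\<bar> \<le> B"
    using B y nu norm_triangle_ineq[of y u] by auto
  moreover have "\<bar>P y\<bar> \<le> B" using B y by auto
  ultimately show ?thesis by simp
qed

lemma extract_multi: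
  fixes a :: "nat \<Rightarrow> nat \<Rightarrow> real"
  assumes "\<forall>n. \<forall>i<m. \<bar>a n i\<bar> \<le> B"
  shows "\<exists>r l. strict_mono r \<and> (\<forall>i<m. (\<lambda>k. a (r k) i) \<longlonglongrightarrow> l i)"
  using assms
proof (induction m)
  case 0
  then show ?case by (intro exI[of _ id]) (auto simp: strict_mono_def)
next
  case (Suc m)
  then obtain r l where r: "strict_mono r" "\<forall>i<m. (\<lambda>k. a (r k) i) \<longlonglongrightarrow> l i" by auto
  have "bounded (range (\<lambda>k. a (r k) m))"
    using Suc.prems by (auto simp: bounded_real)
  then obtain l' r' where r': "strict_mono r'" "((\<lambda>k. a (r k) m) \<circ> r') \<longlonglongrightarrow> l'"
    using bounded_imp_convergent_subsequence by blast
  have "(\<lambda>k. a ((r \<circ> r') k) i) \<longlonglongrightarrow> (l(m := l')) i" if i: "i < Suc m" for i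
  proof (cases "i = m")
    case True then show ?thesis using r' by (simp add: o_def)
  next
    case False
    then have "i < m" using i by simp
    then have "((\<lambda>k. a (r k) i) \<circ> r') \<longlonglongrightarrow> l i"
      using r(2) r'(1) LIMSEQ_subseq_LIMSEQ by blast
    then show ?thesis using False by (simp add: o_def)
  qed
  then show ?case using strict_mono_o[OF r(1) r'(1)] by blast
qed

lemma conv_min:
  fixes P :: "'a::euclidean_space \<Rightarrow> real"
  assumes cv: "convex_on UNIV P"
    and mn: "\<And>z. P x0 \<le> a \<bullet> (z - x0) + C * (norm (z - x0))\<^sup>2 + P z"
  shows "- a \<in> subdiff P x0"
  unfolding subdiff_def
proof (safe)
  fix y
  define N where "N = (norm (y - x0))\<^sup>2"
  have "P x0 \<le> P y + a \<bullet> (y - x0) + e" if e: "e > 0" for e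
  proof -
    define s where "s = min 1 (e / (\<bar>C\<bar> * N + 1))"
    have N0: "N \<ge> 0" by (simp add: N_def)
    have s0: "0 < s" "s \<le> 1" using e N0 by (auto simp: s_def intro!: divide_pos_pos add_nonneg_pos)
    have sCN: "s * (\<bar>C\<bar> * N) \<le> e"
    proof -
      have "s * (\<bar>C\<bar> * N) \<le> e / (\<bar>C\<bar> * N + 1) * (\<bar>C\<bar> * N)"
        using N0 s0 by (intro mult_right_mono) (auto simp: s_def)
      also have "\<dots> \<le> e / (\<bar>C\<bar> * N + 1) * (\<bar>C\<bar> * N + 1)"
        using N0 e by (intro mult_left_mono) auto
      also have "\<dots> = e"
      proof -
        have "\<bar>C\<bar> * N + 1 > 0" using N0 by (simp add: add_nonneg_pos)
        then show ?thesis by simp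
      qed
      finally show ?thesis .
    qed
    define z where "z = x0 + s *\<^sub>R (y - x0)"
    have "P z \<le> (1 - s) * P x0 + s * P y"
    proof -
      have "z = (1 - s) *\<^sub>R x0 + s *\<^sub>R y" by (simp add: z_def algebra_simps)
      moreover have "P ((1 - s) *\<^sub>R x0 + s *\<^sub>R y) \<le> (1 - s) * P x0 + s * P y"
        by (rule convex_onD[OF cv]) (use s0 in auto)
      ultimately show ?thesis by (simp only:)
    qed
    moreover have "P x0 \<le> s * (a \<bullet> (y - x0)) + C * (s\<^sup>2 * N) + P z"
      using mn[of z] by (simp add: z_def N_def power_mult_distrib)
    ultimately have "s * P x0 \<le> s * (a \<bullet> (y - x0)) + s * (s * (C * N)) + s * P y"
      by (simp add: algebra_simps power2_eq_square)
    then have "P x0 \<le> a \<bullet> (y - x0) + s * (C * N) + P y"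
      using s0 by (simp add: distrib_left[symmetric] mult_le_cancel_left_pos)
    moreover have "s * (C * N) \<le> s * (\<bar>C\<bar> * N)"
      using s0 N0 by (intro mult_left_mono mult_right_mono) auto
    ultimately show ?thesis using sCN by linarith
  qed
  then have "P x0 \<le> P y + a \<bullet> (y - x0)" by (rule field_le_epsilon)
  then show "P x0 + - a \<bullet> (y - x0) \<le> P y" by simp
qed

lemma keep_sub:
  assumes "(\<lambda>k. s (r k)) \<longlonglongrightarrow> l" "strict_mono r'"
  shows "(\<lambda>k. s (r (r' k))) \<longlonglongrightarrow> l"
  using LIMSEQ_subseq_LIMSEQ[OF assms] by (simp add: o_def)

lemma bounded_range_sub:
  assumes "bounded (range u)" shows "bounded (range (\<lambda>k. u (r k)))"
  by (rule bounded_subset[OF assms]) auto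

lemma extract_all:
  fixes u v :: "nat \<Rightarrow> 'a::euclidean_space" and w :: "nat \<Rightarrow> real" and p q :: "nat \<Rightarrow> nat \<Rightarrow> real"
  assumes bu: "bounded (range u)" and bv: "bounded (range v)" and bw: "bounded (range w)"
    and bp: "\<forall>n. \<forall>i<m. \<bar>p n i\<bar> \<le> B1" and bq: "\<forall>n. \<forall>i<m. \<bar>q n i\<bar> \<le> B2"
  shows "\<exists>r u0 v0 w0 p0 q0. strict_mono r \<and> (\<lambda>k. u (r k)) \<longlonglongrightarrow> u0 \<and> (\<lambda>k. v (r k)) \<longlonglongrightarrow> v0
     \<and> (\<lambda>k. w (r k)) \<longlonglongrightarrow> w0 \<and> (\<forall>i<m. (\<lambda>k. p (r k) i) \<longlonglongrightarrow> p0 i)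
     \<and> (\<forall>i<m. (\<lambda>k. q (r k) i) \<longlonglongrightarrow> q0 i)"
proof -
  obtain u0 r1 where r1: "strict_mono r1" "(u \<circ> r1) \<longlonglongrightarrow> u0"
    using bounded_imp_convergent_subsequence[OF bu] by blast
  obtain v0 r2 where r2: "strict_mono r2" "((\<lambda>k. v (r1 k)) \<circ> r2) \<longlonglongrightarrow> v0"
    using bounded_imp_convergent_subsequence[OF bounded_range_sub[OF bv, of r1]] by blast
  obtain w0 r3 where r3: "strict_mono r3" "((\<lambda>k. w (r1 (r2 k))) \<circ> r3) \<longlonglongrightarrow> w0"
    using bounded_imp_convergent_subsequence[OF bounded_range_sub[OF bw, of "\<lambda>k. r1 (r2 k)"]] by blast
  obtain r4 p0 where r4: "strict_mono r4" "\<forall>i<m. (\<lambda>k. p (r1 (r2 (r3 (r4 k)))) i) \<longlonglongrightarrow> p0 i"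
    using extract_multi[of m "\<lambda>n i. p (r1 (r2 (r3 n))) i" B1] bp by auto
  obtain r5 q0 where r5: "strict_mono r5" "\<forall>i<m. (\<lambda>k. q (r1 (r2 (r3 (r4 (r5 k))))) i) \<longlonglongrightarrow> q0 i"
    using extract_multi[of m "\<lambda>n i. q (r1 (r2 (r3 (r4 n)))) i" B2] bq by auto
  define r where "r = (\<lambda>k. r1 (r2 (r3 (r4 (r5 k)))))"
  have sm: "strict_mono r"
    using strict_mono_o[OF r1(1) strict_mono_o[OF r2(1) strict_mono_o[OF r3(1) strict_mono_o[OF r4(1) r5(1)]]]]
    by (simp add: r_def o_def)
  have s45: "strict_mono (\<lambda>k. r4 (r5 k))" using strict_mono_o[OF r4(1) r5(1)] by (simp add: o_def)
  have s345: "strict_mono (\<lambda>k. r3 (r4 (r5 k)))" using strict_mono_o[OF r3(1) s45] by (simp add: o_def)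
  have s2345: "strict_mono (\<lambda>k. r2 (r3 (r4 (r5 k))))" using strict_mono_o[OF r2(1) s345] by (simp add: o_def)
  have "(\<lambda>k. u (r k)) \<longlonglongrightarrow> u0"
    using keep_sub[of u r1 u0, OF _ s2345] r1(2) by (simp add: r_def o_def)
  moreover have "(\<lambda>k. v (r k)) \<longlonglongrightarrow> v0"
    using keep_sub[of "\<lambda>k. v (r1 k)" r2 v0, OF _ s345] r2(2) by (simp add: r_def o_def)
  moreover have "(\<lambda>k. w (r k)) \<longlonglongrightarrow> w0"
    using keep_sub[of "\<lambda>k. w (r1 (r2 k))" r3 w0, OF _ s45] r3(2) by (simp add: r_def o_def)
  moreover have "\<forall>i<m. (\<lambda>k. p (r k) i) \<longlonglongrightarrow> p0 i"
  proof safe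
    fix i assume "i < m"
    then show "(\<lambda>k. p (r k) i) \<longlonglongrightarrow> p0 i"
      using keep_sub[of "\<lambda>k. p (r1 (r2 (r3 k))) i" r4 "p0 i", OF _ r5(1)] r4(2) by (simp add: r_def)
  qed
  moreover have "\<forall>i<m. (\<lambda>k. q (r k) i) \<longlonglongrightarrow> q0 i"
    using r5(2) by (simp add: r_def)
  ultimately show ?thesis using sm by blast
qed


locale scp =
  fixes f P1 P2 :: "'a::euclidean_space \<Rightarrow> real"
    and gradf :: "'a \<Rightarrow> 'a"
    and g :: "nat \<Rightarrow> 'a \<Rightarrow> real" and gradg :: "nat \<Rightarrow> 'a \<Rightarrow> 'a" and m :: nat
    and c Llo Lhi \<tau> :: real
    and x xi :: "nat \<Rightarrow> 'a" and Lf :: "nat \<Rightarrow> real" and Lg lam :: "nat \<Rightarrow> nat \<Rightarrow> real"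
  assumes f_grad: "\<And>y. (f has_derivative (\<lambda>h. gradf y \<bullet> h)) (at y)"
    and P1_convex: "convex_on UNIV P1" and P1_cont: "continuous_on UNIV P1"
    and P2_convex: "convex_on UNIV P2" and P2_cont: "continuous_on UNIV P2"
    and feasible_nonempty: "\<exists>y. feasible g m y"
    and A1: "\<exists>L. \<forall>y z. norm (gradf y - gradf z) \<le> L * norm (y - z)"
    and A2_diff: "\<And>i y. i < m \<Longrightarrow> (g i has_derivative (\<lambda>h. gradg i y \<bullet> h)) (at y)"
    and A2_lip: "\<And>i. i < m \<Longrightarrow> \<exists>L. \<forall>y z. norm (gradg i y - gradg i z) \<le> L * norm (y - z)"
    and A3_level_bounded:
      "\<And>\<alpha>. bounded {y. feasible g m y \<and> f y + P1 y - P2 y \<le> \<alpha>}"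
    and B_cont_diff: "\<And>i. i < m \<Longrightarrow> continuous_on UNIV (gradg i)"
    and B_MFCQ: "\<And>y. feasible g m y \<Longrightarrow>
                   \<exists>d. \<forall>i<m. g i y = 0 \<longrightarrow> gradg i y \<bullet> d < 0"
    and c_pos: "c > 0" and Llo_pos: "0 < Llo" and Llo_Lhi: "Llo < Lhi" and tau_gt: "\<tau> > 1"
    and x0_feas: "feasible g m (x 0)"
    and xi_sub: "\<And>t. xi t \<in> subdiff P2 (x t)"
    and step: "\<And>t. scp_ls_step f gradf P1 P2 g gradg m c Llo Lhi \<tau>
                     (x t) (xi t) (Lf t) (Lg t) (x (Suc t))"
    and mult: "\<And>t. sub_multiplier gradf P1 g gradg m (x t) (xi t) (Lf t) (Lg t)
                     (x (Suc t)) (lam t)"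
begin

lemma lipf: obtains L0 where "L0 \<ge> 0" "\<And>y z. norm (gradf y - gradf z) \<le> L0 * norm (y - z)"
proof -
  obtain L where L: "\<forall>y z. norm (gradf y - gradf z) \<le> L * norm (y - z)" using A1 by blast
  have "norm (gradf y - gradf z) \<le> max L 0 * norm (y - z)" for y z
    using L by (metis max.cobounded1 mult_right_mono norm_ge_zero order.trans)
  then show ?thesis using that[of "max L 0"] by auto
qed

lemma lipg: obtains Lgi Lgmax where
  "\<And>i y z. i < m \<Longrightarrow> norm (gradg i y - gradg i z) \<le> Lgi i * norm (y - z)"
  "\<And>i. i < m \<Longrightarrow> Lgi i \<le> Lgmax"
proof -
  have "\<forall>i. \<exists>L. i < m \<longrightarrow> (\<forall>y z. norm (gradg i y - gradg i z) \<le> L * norm (y - z))"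
    using A2_lip by blast
  then obtain Lgi where Lgi: "\<forall>i. i < m \<longrightarrow> (\<forall>y z. norm (gradg i y - gradg i z) \<le> Lgi i * norm (y - z))"
    using choice by metis
  have "Lgi i \<le> (\<Sum>j<m. \<bar>Lgi j\<bar>)" if "i < m" for i
  proof -
    have "\<bar>Lgi i\<bar> \<le> (\<Sum>j<m. \<bar>Lgi j\<bar>)" by (rule member_le_sum) (use that in auto)
    then show ?thesis by linarith
  qed
  then show ?thesis using that[of Lgi "\<Sum>j<m. \<bar>Lgi j\<bar>"] Lgi by auto
qed

lemma feas: "feasible g m (x t)"
proof (induction t)
  case 0 then show ?case by (rule x0_feas)
next
  case (Suc t)
  obtain L0 where L0: "L0 \<ge> 0" "\<And>y z. norm (gradf y - gradf z) \<le> L0 * norm (y - z)" using lipf by blast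
  obtain Lgi Lgmax where G: "\<And>i y z. i < m \<Longrightarrow> norm (gradg i y - gradg i z) \<le> Lgi i * norm (y - z)"
    "\<And>i. i < m \<Longrightarrow> Lgi i \<le> Lgmax" using lipg by blast
  show ?case
    using step_analysis[OF f_grad L0(2) L0(1) A2_diff G(1) G(2) c_pos Llo_pos Llo_Lhi tau_gt Suc xi_sub step]
    by blast
qed

lemma steps: "\<exists>(BF::real) (BG::real). \<forall>t.
   f (x (Suc t)) + P1 (x (Suc t)) - P2 (x (Suc t)) \<le> f (x t) + P1 (x t) - P2 (x t) - c / 2 * (norm (x (Suc t) - x t))\<^sup>2
   \<and> Llo \<le> Lf t \<and> Lf t \<le> BF \<and> (\<forall>i<m. Llo \<le> Lg t i \<and> Lg t i \<le> BG)"
proof -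
  obtain L0 where L0: "L0 \<ge> 0" "\<And>y z. norm (gradf y - gradf z) \<le> L0 * norm (y - z)" using lipf by blast
  obtain Lgi Lgmax where G: "\<And>i y z. i < m \<Longrightarrow> norm (gradg i y - gradg i z) \<le> Lgi i * norm (y - z)"
    "\<And>i. i < m \<Longrightarrow> Lgi i \<le> Lgmax" using lipg by blast
  show ?thesis
    using step_analysis[OF f_grad L0(2) L0(1) A2_diff G(1) G(2) c_pos Llo_pos Llo_Lhi tau_gt feas xi_sub step]
    by blast
qed

lemma Fdec: "f (x t) + P1 (x t) - P2 (x t) \<le> f (x 0) + P1 (x 0) - P2 (x 0)"
proof (induction t)
  case (Suc t)
  from steps obtain BF BG where "\<forall>t.
   f (x (Suc t)) + P1 (x (Suc t)) - P2 (x (Suc t)) \<le> f (x t) + P1 (x t) - P2 (x t) - c / 2 * (norm (x (Suc t) - x t))\<^sup>2"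
    by blast
  then have "f (x (Suc t)) + P1 (x (Suc t)) - P2 (x (Suc t)) \<le> f (x t) + P1 (x t) - P2 (x t)"
  proof -
    have "c / 2 * (norm (x (Suc t) - x t))\<^sup>2 \<ge> 0" using c_pos by simp
    then show ?thesis using \<open>\<forall>t. _\<close>[rule_format, of t] by linarith
  qed
  then show ?case using Suc by linarith
qed simp

lemma xbounded: "\<exists>R. \<forall>t. norm (x t) \<le> R"
proof -
  obtain R where R: "\<forall>y\<in>{y. feasible g m y \<and> f y + P1 y - P2 y \<le> f (x 0) + P1 (x 0) - P2 (x 0)}. norm y \<le> R"
    using A3_level_bounded by (auto simp: bounded_iff)
  show ?thesis using R feas Fdec by (intro exI[of _ R]) auto
qed

lemma f_cont: "continuous_on UNIV f"
  by (rule continuous_at_imp_continuous_on) (use has_derivative_continuous[OF f_grad] in blast)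

lemma g_cont: "i < m \<Longrightarrow> continuous_on UNIV (g i)"
  by (rule continuous_at_imp_continuous_on) (use has_derivative_continuous[OF A2_diff] in blast)

lemma gradf_cont: "continuous_on UNIV gradf"
proof -
  obtain L0 where L0: "L0 \<ge> 0" "\<And>y z. norm (gradf y - gradf z) \<le> L0 * norm (y - z)" using lipf by blast
  show ?thesis by (rule lip_cont[OF L0(2)])
qed

lemma diff_zero: "(\<lambda>t. x (Suc t) - x t) \<longlonglongrightarrow> 0"
proof -
  define F where "F y = f y + P1 y - P2 y" for y
  obtain R where R: "\<forall>t. norm (x t) \<le> R" using xbounded by blast
  have cF: "continuous_on UNIV F" unfolding F_def
    by (intro continuous_on_add continuous_on_diff f_cont P1_cont P2_cont)
  obtain Q where Q: "\<forall>y. norm y \<le> R \<longrightarrow> \<bar>F y\<bar> \<le> Q" using cont_bound[OF cF] by blast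
  from steps obtain BF BG where st: "\<forall>t. F (x (Suc t)) \<le> F (x t) - c / 2 * (norm (x (Suc t) - x t))\<^sup>2"
    unfolding F_def by blast
  have ps: "(\<Sum>t<n. c / 2 * (norm (x (Suc t) - x t))\<^sup>2) \<le> F (x 0) - F (x n)" for n
  proof (induction n)
    case (Suc n) then show ?case using st[rule_format, of n] by simp
  qed simp
  have "(\<Sum>t<n. c / 2 * (norm (x (Suc t) - x t))\<^sup>2) \<le> 2 * Q" for n
  proof -
    have "\<bar>F (x 0)\<bar> \<le> Q" "\<bar>F (x n)\<bar> \<le> Q" using Q R by auto
    then show ?thesis using ps[of n] by linarith
  qed
  then have "summable (\<lambda>t. c / 2 * (norm (x (Suc t) - x t))\<^sup>2)"
    using c_pos by (intro summableI_nonneg_bounded) auto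
  then have "(\<lambda>t. c / 2 * (norm (x (Suc t) - x t))\<^sup>2) \<longlonglongrightarrow> 0" by (rule summable_LIMSEQ_zero)
  then have "(\<lambda>t. (2 / c) * (c / 2 * (norm (x (Suc t) - x t))\<^sup>2)) \<longlonglongrightarrow> (2 / c) * 0"
    by (rule tendsto_mult_left)
  then have "(\<lambda>t. (norm (x (Suc t) - x t))\<^sup>2) \<longlonglongrightarrow> 0" using c_pos by simp
  then have "(\<lambda>t. sqrt ((norm (x (Suc t) - x t))\<^sup>2)) \<longlonglongrightarrow> sqrt 0" by (rule tendsto_real_sqrt)
  then have "(\<lambda>t. norm (x (Suc t) - x t)) \<longlonglongrightarrow> 0" by simp
  then show ?thesis by (simp add: tendsto_norm_zero_iff)
qed

lemma xi_bounded: "\<exists>B. \<forall>t. norm (xi t) \<le> B"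
proof -
  obtain R where R: "\<forall>t. norm (x t) \<le> R" using xbounded by blast
  obtain B where B: "\<forall>y. norm y \<le> R + 1 \<longrightarrow> \<bar>P2 y\<bar> \<le> B" using cont_bound[OF P2_cont] by blast
  show ?thesis using subgrad_bound[OF xi_sub] R B by (intro exI[of _ "2 * B"]) auto
qed

lemma lam_nonneg: "i < m \<Longrightarrow> lam t i \<ge> 0"
  using mult[of t] by (simp add: sub_multiplier_def)

end

context scp begin

lemma core:
  assumes sig: "filterlim \<sigma> at_top sequentially"
    and rho0: "\<And>k. \<rho> k \<ge> 0" and rho: "\<rho> \<longlonglongrightarrow> \<rho>0"
    and y: "(\<lambda>k. x (\<sigma> k)) \<longlonglongrightarrow> ys" and v: "(\<lambda>k. xi (\<sigma> k)) \<longlonglongrightarrow> v"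
    and lf: "(\<lambda>k. Lf (\<sigma> k)) \<longlonglongrightarrow> lf"
    and lg: "\<And>i. i < m \<Longrightarrow> (\<lambda>k. Lg (\<sigma> k) i) \<longlonglongrightarrow> lg i"
    and w: "\<And>i. i < m \<Longrightarrow> (\<lambda>k. \<rho> k * lam (\<sigma> k) i) \<longlonglongrightarrow> ws i"
  shows "feasible g m ys \<and> (\<forall>i<m. ws i \<ge> 0 \<and> ws i * g i ys = 0) \<and> v \<in> subdiff P2 ys \<and>
    (\<forall>z. \<rho>0 * P1 ys \<le> \<rho>0 * ((gradf ys - v) \<bullet> (z - ys) + lf / 2 * (norm (z - ys))\<^sup>2 + P1 z)
        + (\<Sum>i<m. ws i * (gradg i ys \<bullet> (z - ys) + lg i / 2 * (norm (z - ys))\<^sup>2)))"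
proof -
  have dz: "(\<lambda>k. x (Suc (\<sigma> k)) - x (\<sigma> k)) \<longlonglongrightarrow> 0"
    using filterlim_compose[OF diff_zero sig] by simp
  have z: "(\<lambda>k. x (Suc (\<sigma> k))) \<longlonglongrightarrow> ys"
  proof -
    have "(\<lambda>k. x (\<sigma> k) + (x (Suc (\<sigma> k)) - x (\<sigma> k))) \<longlonglongrightarrow> ys + 0"
      by (rule tendsto_add[OF y dz])
    then show ?thesis by simp
  qed
  have gy: "(\<lambda>k. g i (x (\<sigma> k))) \<longlonglongrightarrow> g i ys" if "i < m" for i
    by (rule cont_comp[OF g_cont[OF that] y])
  have ggy: "(\<lambda>k. gradg i (x (\<sigma> k))) \<longlonglongrightarrow> gradg i ys" if "i < m" for i
    by (rule cont_comp[OF B_cont_diff[OF that] y])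
  have gfy: "(\<lambda>k. gradf (x (\<sigma> k))) \<longlonglongrightarrow> gradf ys"
    by (rule cont_comp[OF gradf_cont y])
  have P1z: "(\<lambda>k. P1 (x (Suc (\<sigma> k)))) \<longlonglongrightarrow> P1 ys"
    by (rule cont_comp[OF P1_cont z])
  have P2y: "(\<lambda>k. P2 (x (\<sigma> k))) \<longlonglongrightarrow> P2 ys"
    by (rule cont_comp[OF P2_cont y])
  have feasys: "feasible g m ys"
    unfolding feasible_def
  proof safe
    fix i assume i: "i < m"
    show "g i ys \<le> 0"
      by (rule LIMSEQ_le_const2[OF gy[OF i]]) (use feas i in \<open>auto simp: feasible_def\<close>)
  qed
  have wpos: "ws i \<ge> 0" if i: "i < m" for i
    by (rule LIMSEQ_le_const[OF w[OF i]]) (use rho0 lam_nonneg i in auto)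
  have Gz: "(\<lambda>k. Gbar g gradg i (x (Suc (\<sigma> k))) (x (\<sigma> k)) (Lg (\<sigma> k))) \<longlonglongrightarrow> g i ys" if i: "i < m" for i
  proof -
    have "(\<lambda>k. g i (x (\<sigma> k)) + gradg i (x (\<sigma> k)) \<bullet> (x (Suc (\<sigma> k)) - x (\<sigma> k))
        + Lg (\<sigma> k) i / 2 * (norm (x (Suc (\<sigma> k)) - x (\<sigma> k)))\<^sup>2)
       \<longlonglongrightarrow> g i ys + gradg i ys \<bullet> 0 + lg i / 2 * (norm (0::'a))\<^sup>2"
      by (intro tendsto_intros gy ggy lg dz i; simp)
    then show ?thesis by (simp add: Gbar_def)
  qed
  have compl: "ws i * g i ys = 0" if i: "i < m" for i
  proof -
    have "(\<lambda>k. \<rho> k * lam (\<sigma> k) i * Gbar g gradg i (x (Suc (\<sigma> k))) (x (\<sigma> k)) (Lg (\<sigma> k)))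
       \<longlonglongrightarrow> ws i * g i ys"
      by (rule tendsto_mult[OF w[OF i] Gz[OF i]])
    moreover have "\<rho> k * lam (\<sigma> k) i * Gbar g gradg i (x (Suc (\<sigma> k))) (x (\<sigma> k)) (Lg (\<sigma> k)) = 0" for k
      using mult[of "\<sigma> k"] i by (simp add: sub_multiplier_def)
    ultimately show ?thesis using LIMSEQ_unique tendsto_const by fastforce
  qed
  have sub2: "v \<in> subdiff P2 ys"
    unfolding subdiff_def
  proof safe
    fix z
    have "(\<lambda>k. P2 (x (\<sigma> k)) + xi (\<sigma> k) \<bullet> (z - x (\<sigma> k))) \<longlonglongrightarrow> P2 ys + v \<bullet> (z - ys)"
      by (intro tendsto_intros P2y v y)
    moreover have "P2 (x (\<sigma> k)) + xi (\<sigma> k) \<bullet> (z - x (\<sigma> k)) \<le> P2 z" for k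
      using xi_sub[of "\<sigma> k"] by (simp add: subdiff_def)
    ultimately show "P2 ys + v \<bullet> (z - ys) \<le> P2 z"
      using LIMSEQ_le_const2 by blast
  qed
  have ineq: "\<rho>0 * P1 ys \<le> \<rho>0 * ((gradf ys - v) \<bullet> (z - ys) + lf / 2 * (norm (z - ys))\<^sup>2 + P1 z)
        + (\<Sum>i<m. ws i * (gradg i ys \<bullet> (z - ys) + lg i / 2 * (norm (z - ys))\<^sup>2))" for z
  proof -
    define S where "S k = subobj gradf P1 (x (\<sigma> k)) (xi (\<sigma> k)) (Lf (\<sigma> k))" for k
    define G where "G k i w = Gbar g gradg i w (x (\<sigma> k)) (Lg (\<sigma> k))" for k i w
    have each: "\<rho> k * S k (x (Suc (\<sigma> k))) \<le> \<rho> k * S k z + (\<Sum>i<m. (\<rho> k * lam (\<sigma> k) i) * G k i z)" for k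
    proof -
      have M: "S k (x (Suc (\<sigma> k))) + (\<Sum>i<m. lam (\<sigma> k) i * G k i (x (Suc (\<sigma> k))))
          \<le> S k z + (\<Sum>i<m. lam (\<sigma> k) i * G k i z)"
        "\<forall>i<m. lam (\<sigma> k) i * G k i (x (Suc (\<sigma> k))) = 0"
        using mult[of "\<sigma> k"] unfolding sub_multiplier_def S_def G_def by blast+
      have "(\<Sum>i<m. lam (\<sigma> k) i * G k i (x (Suc (\<sigma> k)))) = 0"
        using M(2) by (intro sum.neutral) blast
      then have "S k (x (Suc (\<sigma> k))) \<le> S k z + (\<Sum>i<m. lam (\<sigma> k) i * G k i z)" using M(1) by simp
      then have "\<rho> k * S k (x (Suc (\<sigma> k))) \<le> \<rho> k * (S k z + (\<Sum>i<m. lam (\<sigma> k) i * G k i z))"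
        using rho0[of k] by (intro mult_left_mono)
      then show ?thesis by (simp add: distrib_left sum_distrib_left mult.assoc)
    qed
    have L: "(\<lambda>k. \<rho> k * S k (x (Suc (\<sigma> k)))) \<longlonglongrightarrow>
        \<rho>0 * ((gradf ys - v) \<bullet> (ys - ys) + lf / 2 * (norm (ys - ys))\<^sup>2 + P1 ys)"
      unfolding S_def subobj_def by (intro tendsto_intros rho gfy v z y lf P1z; simp)
    have GL: "(\<lambda>k. G k i z) \<longlonglongrightarrow> g i ys + gradg i ys \<bullet> (z - ys) + lg i / 2 * (norm (z - ys))\<^sup>2"
      if i: "i < m" for i
      unfolding G_def Gbar_def by (intro tendsto_intros gy ggy lg y i; simp)
    have R: "(\<lambda>k. \<rho> k * S k z + (\<Sum>i<m. (\<rho> k * lam (\<sigma> k) i) * G k i z)) \<longlonglongrightarrow>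
        \<rho>0 * ((gradf ys - v) \<bullet> (z - ys) + lf / 2 * (norm (z - ys))\<^sup>2 + P1 z)
        + (\<Sum>i<m. ws i * (g i ys + gradg i ys \<bullet> (z - ys) + lg i / 2 * (norm (z - ys))\<^sup>2))"
      unfolding S_def subobj_def
      by (intro tendsto_intros rho gfy v y lf tendsto_mult[OF w GL]; simp)
    have "\<rho>0 * ((gradf ys - v) \<bullet> (ys - ys) + lf / 2 * (norm (ys - ys))\<^sup>2 + P1 ys) \<le>
        \<rho>0 * ((gradf ys - v) \<bullet> (z - ys) + lf / 2 * (norm (z - ys))\<^sup>2 + P1 z)
        + (\<Sum>i<m. ws i * (g i ys + gradg i ys \<bullet> (z - ys) + lg i / 2 * (norm (z - ys))\<^sup>2))"
      by (rule LIMSEQ_le[OF L R]) (use each in auto)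
    moreover have "(\<Sum>i<m. ws i * (g i ys + gradg i ys \<bullet> (z - ys) + lg i / 2 * (norm (z - ys))\<^sup>2))
        = (\<Sum>i<m. ws i * (gradg i ys \<bullet> (z - ys) + lg i / 2 * (norm (z - ys))\<^sup>2))"
      by (rule sum.cong) (use compl in \<open>auto simp: distrib_left\<close>)
    ultimately show ?thesis by simp
  qed
  show ?thesis using feasys wpos compl sub2 ineq by blast
qed

end

context scp begin

lemma bounds_all: "\<exists>R BXi BF BG. (\<forall>t. norm (x t) \<le> R) \<and> (\<forall>t. norm (xi t) \<le> BXi)
   \<and> (\<forall>t. \<bar>Lf t\<bar> \<le> BF) \<and> (\<forall>t. \<forall>i<m. \<bar>Lg t i\<bar> \<le> BG)"
proof -
  obtain R where R: "\<forall>t. norm (x t) \<le> R" using xbounded by blast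
  obtain BXi where X: "\<forall>t. norm (xi t) \<le> BXi" using xi_bounded by blast
  obtain BF BG where S: "\<forall>t. Llo \<le> Lf t \<and> Lf t \<le> BF \<and> (\<forall>i<m. Llo \<le> Lg t i \<and> Lg t i \<le> BG)"
    using steps by blast
  have "\<forall>t. \<bar>Lf t\<bar> \<le> BF"
  proof
    fix t
    have h: "Llo \<le> Lf t" "Lf t \<le> BF" using S by auto
    then have "\<bar>Lf t\<bar> = Lf t" using Llo_pos by (intro abs_of_nonneg) linarith
    then show "\<bar>Lf t\<bar> \<le> BF" using h by simp
  qed
  moreover have "\<forall>t. \<forall>i<m. \<bar>Lg t i\<bar> \<le> BG"
  proof safe
    fix t i assume i: "i < m"
    have h: "Llo \<le> Lg t i" "Lg t i \<le> BG" using S i by auto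
    then have "\<bar>Lg t i\<bar> = Lg t i" using Llo_pos by (intro abs_of_nonneg) linarith
    then show "\<bar>Lg t i\<bar> \<le> BG" using h by simp
  qed
  ultimately show ?thesis using R X by blast
qed

lemma bseq_helper:
  fixes s :: "nat \<Rightarrow> 'b::real_normed_vector"
  assumes "\<forall>t. norm (s t) \<le> B" shows "bounded (range (\<lambda>k. s (\<sigma> k)))"
  using assms unfolding bounded_iff by auto

lemma bseq_helper_real:
  fixes s :: "nat \<Rightarrow> real"
  assumes "\<forall>t. \<bar>s t\<bar> \<le> B" shows "bounded (range (\<lambda>k. s (\<sigma> k)))"
  using assms unfolding bounded_iff by auto

lemma lam_bounded: "\<exists>B. \<forall>t. \<forall>i<m. \<bar>lam t i\<bar> \<le> B"
proof (rule ccontr)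
  assume nb: "\<not> ?thesis"
  define S where "S t = (\<Sum>i<m. lam t i)" for t
  have S0: "S t \<ge> 0" for t unfolding S_def by (intro sum_nonneg) (use lam_nonneg in auto)
  have lS: "lam t i \<le> S t" if "i < m" for t i
    unfolding S_def by (rule member_le_sum) (use that lam_nonneg in auto)
  have ex: "\<exists>t\<ge>n. S t \<ge> real n + 1" for n
  proof (rule ccontr)
    assume "\<not> ?thesis"
    then have h: "\<forall>t\<ge>n. S t < real n + 1" by auto
    define B where "B = real n + 1 + (\<Sum>t<n. S t)"
    have "\<bar>lam t i\<bar> \<le> B" if i: "i < m" for t i
    proof -
      have a: "\<bar>lam t i\<bar> \<le> S t" using lS[OF i] lam_nonneg[OF i] by simp
      have sp: "(\<Sum>t<n. S t) \<ge> 0" by (intro sum_nonneg) (use S0 in auto)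
      show ?thesis
      proof (cases "t < n")
        case True
        have "S t \<le> (\<Sum>t<n. S t)" by (rule member_le_sum) (use True S0 in auto)
        then show ?thesis using a B_def by simp
      next
        case False
        then have "S t < real n + 1" using h by auto
        then show ?thesis using a sp B_def by linarith
      qed
    qed
    with nb show False by blast
  qed
  then obtain \<sigma> where sg: "\<And>n. \<sigma> n \<ge> n \<and> S (\<sigma> n) \<ge> real n + 1" by metis
  have sig: "filterlim \<sigma> at_top sequentially"
    by (rule filterlim_at_top_mono[OF filterlim_ident]) (use sg in auto)
  obtain R BXi BF BG where B: "\<forall>t. norm (x t) \<le> R" "\<forall>t. norm (xi t) \<le> BXi"
    "\<forall>t. \<bar>Lf t\<bar> \<le> BF" "\<forall>t. \<forall>i<m. \<bar>Lg t i\<bar> \<le> BG" using bounds_all by blast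
  define q where "q n i = lam (\<sigma> n) i / S (\<sigma> n)" for n i
  have Spos: "S (\<sigma> n) > 0" for n 
  proof -
    have "0 \<le> real n" by simp
    then show ?thesis using sg[of n] by linarith
  qed
  have bq: "\<forall>n. \<forall>i<m. \<bar>q n i\<bar> \<le> 1"
  proof safe
    fix n i assume i: "i < m"
    have "0 \<le> lam (\<sigma> n) i" "lam (\<sigma> n) i \<le> S (\<sigma> n)" using lam_nonneg[OF i] lS[OF i] by auto
    then show "\<bar>q n i\<bar> \<le> 1" using Spos[of n] by (simp add: q_def divide_le_eq_1)
  qed
  have bp: "\<forall>n. \<forall>i<m. \<bar>Lg (\<sigma> n) i\<bar> \<le> BG" using B(4) by blast
  obtain r ys v lf lg ws where r: "strict_mono r" "(\<lambda>k. x (\<sigma> (r k))) \<longlonglongrightarrow> ys"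
    "(\<lambda>k. xi (\<sigma> (r k))) \<longlonglongrightarrow> v" "(\<lambda>k. Lf (\<sigma> (r k))) \<longlonglongrightarrow> lf"
    "\<forall>i<m. (\<lambda>k. Lg (\<sigma> (r k)) i) \<longlonglongrightarrow> lg i" "\<forall>i<m. (\<lambda>k. q (r k) i) \<longlonglongrightarrow> ws i"
    using extract_all[OF bseq_helper[OF B(1)] bseq_helper[OF B(2)] bseq_helper_real[OF B(3)] bp bq]
    by blast
  define \<rho> where "\<rho> k = 1 / S (\<sigma> (r k))" for k
  have sig': "filterlim (\<lambda>k. \<sigma> (r k)) at_top sequentially"
    using filterlim_compose[OF sig filterlim_subseq[OF r(1)]] .
  have rho0: "\<rho> k \<ge> 0" for k using S0 by (simp add: \<rho>_def)
  have rho: "\<rho> \<longlonglongrightarrow> 0"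
  proof (rule tendsto_sandwich[OF _ _ tendsto_const LIMSEQ_inverse_real_of_nat])
    show "\<forall>\<^sub>F n in sequentially. 0 \<le> \<rho> n" using rho0 by simp
    show "\<forall>\<^sub>F n in sequentially. \<rho> n \<le> inverse (real (Suc n))"
    proof (rule always_eventually, rule allI)
      fix n
      have "real n \<le> real (r n)" using seq_suble[OF r(1)] by simp
      moreover have "real (r n) + 1 \<le> S (\<sigma> (r n))" using sg[of "r n"] by simp
      ultimately have "real (Suc n) \<le> S (\<sigma> (r n))" by simp
      then show "\<rho> n \<le> inverse (real (Suc n))"
        unfolding \<rho>_def by (simp add: inverse_eq_divide frac_le)
    qed
  qed
  have w: "(\<lambda>k. \<rho> k * lam (\<sigma> (r k)) i) \<longlonglongrightarrow> ws i" if "i < m" for i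
    using r(6) that by (simp add: \<rho>_def q_def)
  have core_res: "feasible g m ys \<and> (\<forall>i<m. ws i \<ge> 0 \<and> ws i * g i ys = 0) \<and> v \<in> subdiff P2 ys \<and>
    (\<forall>z. 0 * P1 ys \<le> 0 * ((gradf ys - v) \<bullet> (z - ys) + lf / 2 * (norm (z - ys))\<^sup>2 + P1 z)
        + (\<Sum>i<m. ws i * (gradg i ys \<bullet> (z - ys) + lg i / 2 * (norm (z - ys))\<^sup>2)))"
    by (rule core[OF sig' rho0 rho r(2) r(3) r(4)]) (use r(5) w in auto)
  then have fy: "feasible g m ys" and wpos: "\<And>i. i < m \<Longrightarrow> ws i \<ge> 0"
    and compl: "\<And>i. i < m \<Longrightarrow> ws i * g i ys = 0"
    and ineq: "\<And>z. 0 \<le> (\<Sum>i<m. ws i * (gradg i ys \<bullet> (z - ys) + lg i / 2 * (norm (z - ys))\<^sup>2))"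
    by auto
  have sum1: "(\<Sum>i<m. ws i) = 1"
  proof -
    have "(\<lambda>k. \<Sum>i<m. q (r k) i) \<longlonglongrightarrow> (\<Sum>i<m. ws i)"
      by (rule tendsto_sum) (use r(6) in auto)
    moreover have "(\<Sum>i<m. q (r k) i) = 1" for k
    proof -
      have "(\<Sum>i<m. q (r k) i) = (\<Sum>i<m. lam (\<sigma> (r k)) i) / S (\<sigma> (r k))"
        unfolding q_def by (rule sum_divide_distrib[symmetric])
      also have "\<dots> = S (\<sigma> (r k)) / S (\<sigma> (r k))" unfolding S_def by (rule refl)
      also have "\<dots> = 1" using Spos[of "r k"] by simp
      finally show ?thesis .
    qed
    ultimately have "(\<lambda>k. 1::real) \<longlonglongrightarrow> (\<Sum>i<m. ws i)" by simp
    then show ?thesis using LIMSEQ_unique[OF tendsto_const] by metis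
  qed
  obtain d where d: "\<forall>i<m. g i ys = 0 \<longrightarrow> gradg i ys \<bullet> d < 0" using B_MFCQ[OF fy] by blast
  define a where "a = (\<Sum>i<m. ws i * (gradg i ys \<bullet> d))"
  have aneg: "a < 0"
  proof -
    obtain j where j: "j < m" "ws j > 0"
    proof (rule ccontr)
      assume "\<not> thesis"
      have "\<forall>j<m. ws j = 0"
      proof safe
        fix j assume j: "j < m"
        have "\<not> ws j > 0" using that j \<open>\<not> thesis\<close> by blast
        then show "ws j = 0" using wpos[OF j] by linarith
      qed
      then have "(\<Sum>i<m. ws i) = 0" by simp
      with sum1 show False by simp
    qed
    have le: "ws i * (gradg i ys \<bullet> d) \<le> 0" if i: "i < m" for i
    proof (cases "ws i = 0")
      case False
      then have "g i ys = 0" using compl[OF i] by simp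
      then have "gradg i ys \<bullet> d < 0" using d i by blast
      then show ?thesis using wpos[OF i] by (simp add: mult_nonneg_nonpos)
    qed simp
    have lt: "ws j * (gradg j ys \<bullet> d) < 0"
    proof -
      have "g j ys = 0" using compl[OF j(1)] j(2) by simp
      then have "gradg j ys \<bullet> d < 0" using d j by blast
      then show ?thesis using j(2) by (simp add: mult_pos_neg)
    qed
    have "a < (\<Sum>i<m. (0::real))"
      unfolding a_def by (rule sum_strict_mono_ex1) (use le lt j in auto)
    then show ?thesis by simp
  qed
  define C where "C = (\<Sum>i<m. ws i * (lg i / 2))"
  define N where "N = (norm d)\<^sup>2"
  define K where "K = \<bar>C\<bar> * N"
  have K0: "K \<ge> 0" by (simp add: K_def N_def)
  define s where "s = - a / (K + 1)"
  have s0: "s > 0" unfolding s_def by (rule divide_pos_pos) (use aneg K0 in auto)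
  have expand: "(\<Sum>i<m. ws i * (gradg i ys \<bullet> (ys + s *\<^sub>R d - ys) + lg i / 2 * (norm (ys + s *\<^sub>R d - ys))\<^sup>2))
      = s * a + s * (s * (C * N))"
  proof -
    have "(\<Sum>i<m. ws i * (gradg i ys \<bullet> (ys + s *\<^sub>R d - ys) + lg i / 2 * (norm (ys + s *\<^sub>R d - ys))\<^sup>2))
       = (\<Sum>i<m. s * (ws i * (gradg i ys \<bullet> d)) + (s * s * N) * (ws i * (lg i / 2)))"
      by (rule sum.cong) (auto simp: N_def power_mult_distrib algebra_simps power2_eq_square)
    also have "\<dots> = s * a + s * (s * (C * N))"
      by (simp add: sum.distrib sum_distrib_left a_def C_def algebra_simps)
    finally show ?thesis .
  qed
  have "0 \<le> s * a + s * (s * (C * N))" using ineq[of "ys + s *\<^sub>R d"] expand by simp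
  then have "0 \<le> s * (a + s * (C * N))" by (simp add: algebra_simps)
  then have h1: "0 \<le> a + s * (C * N)" using s0 by (simp add: zero_le_mult_iff)
  have "s * (C * N) \<le> s * K"
    using s0 by (intro mult_left_mono) (auto simp: K_def N_def intro: mult_right_mono)
  moreover have "s * K < - a"
  proof -
    have "s * K = - a * (K / (K + 1))" by (simp add: s_def)
    also have "\<dots> < - a * 1"
      using aneg K0 by (intro mult_strict_left_mono) (auto simp: add_nonneg_pos)
    finally show ?thesis by simp
  qed
  ultimately show False using h1 by linarith
qed

end

context scp begin

lemma stat:
  assumes r0: "strict_mono r0" and xr: "(x \<circ> r0) \<longlonglongrightarrow> xbar"
  shows "stationary gradf P1 P2 g gradg m xbar"
proof -
  obtain Bl where Bl: "\<forall>t. \<forall>i<m. \<bar>lam t i\<bar> \<le> Bl" using lam_bounded by blast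
  obtain R BXi BF BG where B: "\<forall>t. norm (x t) \<le> R" "\<forall>t. norm (xi t) \<le> BXi"
    "\<forall>t. \<bar>Lf t\<bar> \<le> BF" "\<forall>t. \<forall>i<m. \<bar>Lg t i\<bar> \<le> BG" using bounds_all by blast
  have bp: "\<forall>n. \<forall>i<m. \<bar>Lg (r0 n) i\<bar> \<le> BG" using B(4) by blast
  have bq: "\<forall>n. \<forall>i<m. \<bar>lam (r0 n) i\<bar> \<le> Bl" using Bl by blast
  obtain r ys v lf lg ws where r: "strict_mono r" "(\<lambda>k. x (r0 (r k))) \<longlonglongrightarrow> ys"
    "(\<lambda>k. xi (r0 (r k))) \<longlonglongrightarrow> v" "(\<lambda>k. Lf (r0 (r k))) \<longlonglongrightarrow> lf"
    "\<forall>i<m. (\<lambda>k. Lg (r0 (r k)) i) \<longlonglongrightarrow> lg i" "\<forall>i<m. (\<lambda>k. lam (r0 (r k)) i) \<longlonglongrightarrow> ws i"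
    using extract_all[OF bseq_helper[OF B(1)] bseq_helper[OF B(2)] bseq_helper_real[OF B(3)] bp bq]
    by blast
  have y: "(\<lambda>k. x (r0 (r k))) \<longlonglongrightarrow> xbar"
    using keep_sub[of x r0 xbar, OF _ r(1)] xr by (simp add: o_def)
  have sig: "filterlim (\<lambda>k. r0 (r k)) at_top sequentially"
    using filterlim_compose[OF filterlim_subseq[OF r0] filterlim_subseq[OF r(1)]] .
  have core_res: "feasible g m xbar \<and> (\<forall>i<m. ws i \<ge> 0 \<and> ws i * g i xbar = 0) \<and> v \<in> subdiff P2 xbar \<and>
    (\<forall>z. 1 * P1 xbar \<le> 1 * ((gradf xbar - v) \<bullet> (z - xbar) + lf / 2 * (norm (z - xbar))\<^sup>2 + P1 z)
        + (\<Sum>i<m. ws i * (gradg i xbar \<bullet> (z - xbar) + lg i / 2 * (norm (z - xbar))\<^sup>2)))"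
    by (rule core[OF sig _ tendsto_const y r(3) r(4)]) (use r(5) r(6) in auto)
  then have fy: "feasible g m xbar" and wc: "\<forall>i<m. ws i \<ge> 0 \<and> ws i * g i xbar = 0"
    and sv: "v \<in> subdiff P2 xbar"
    and ineq: "\<And>z. P1 xbar \<le> (gradf xbar - v) \<bullet> (z - xbar) + lf / 2 * (norm (z - xbar))\<^sup>2 + P1 z
        + (\<Sum>i<m. ws i * (gradg i xbar \<bullet> (z - xbar) + lg i / 2 * (norm (z - xbar))\<^sup>2))"
    by auto
  define a where "a = gradf xbar - v + (\<Sum>i<m. ws i *\<^sub>R gradg i xbar)"
  define C where "C = lf / 2 + (\<Sum>i<m. ws i * (lg i / 2))"
  have mn: "P1 xbar \<le> a \<bullet> (z - xbar) + C * (norm (z - xbar))\<^sup>2 + P1 z" for z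
  proof -
    define N where "N = (norm (z - xbar))\<^sup>2"
    have e1: "a \<bullet> (z - xbar) = (gradf xbar - v) \<bullet> (z - xbar) + (\<Sum>i<m. ws i * (gradg i xbar \<bullet> (z - xbar)))"
      by (simp add: a_def inner_add_left inner_sum_left)
    have e2: "C * N = lf / 2 * N + (\<Sum>i<m. ws i * (lg i / 2 * N))"
      by (simp add: C_def distrib_right sum_distrib_right mult.assoc)
    have e3: "(\<Sum>i<m. ws i * (gradg i xbar \<bullet> (z - xbar) + lg i / 2 * N))
       = (\<Sum>i<m. ws i * (gradg i xbar \<bullet> (z - xbar))) + (\<Sum>i<m. ws i * (lg i / 2 * N))"
      by (simp add: distrib_left sum.distrib)
    show ?thesis using ineq[of z] e1 e2 e3 unfolding N_def by linarith
  qed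
  have su: "- a \<in> subdiff P1 xbar" by (rule conv_min[OF P1_convex mn])
  have "gradf xbar + - a - v + (\<Sum>i<m. ws i *\<^sub>R gradg i xbar) = 0"
    by (simp add: a_def)
  then show ?thesis
    unfolding stationary_def using fy wc su sv by blast
qed

lemma main: "(\<exists>B. \<forall>t. \<forall>i<m. \<bar>lam t i\<bar> \<le> B) \<and>
         (\<forall>xbar. (\<exists>r. strict_mono r \<and> (x \<circ> r) \<longlonglongrightarrow> xbar) \<longrightarrow>
                  stationary gradf P1 P2 g gradg m xbar)"
  using lam_bounded stat by blast

end

theorem mainTheorem3:
  fixes f P1 P2 :: "'a::euclidean_space \<Rightarrow> real"
    and gradf :: "'a \<Rightarrow> 'a"
    and g :: "nat \<Rightarrow> 'a \<Rightarrow> real" and gradg :: "nat \<Rightarrow> 'a \<Rightarrow> 'a" and m :: nat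
    and c Llo Lhi \<tau> :: real
    and x xi :: "nat \<Rightarrow> 'a" and Lf :: "nat \<Rightarrow> real" and Lg lam :: "nat \<Rightarrow> nat \<Rightarrow> real"
  assumes f_grad: "\<And>y. (f has_derivative (\<lambda>h. gradf y \<bullet> h)) (at y)"
    and P1_convex: "convex_on UNIV P1" and P1_cont: "continuous_on UNIV P1"
    and P2_convex: "convex_on UNIV P2" and P2_cont: "continuous_on UNIV P2"
    and feasible_nonempty: "\<exists>y. feasible g m y"
    and A1: "\<exists>L. \<forall>y z. norm (gradf y - gradf z) \<le> L * norm (y - z)"
    and A2_diff: "\<And>i y. i < m \<Longrightarrow> (g i has_derivative (\<lambda>h. gradg i y \<bullet> h)) (at y)"
    and A2_lip: "\<And>i. i < m \<Longrightarrow> \<exists>L. \<forall>y z. norm (gradg i y - gradg i z) \<le> L * norm (y - z)"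
    and A3_level_bounded:
      "\<And>\<alpha>. bounded {y. feasible g m y \<and> f y + P1 y - P2 y \<le> \<alpha>}"
    and B_cont_diff: "\<And>i. i < m \<Longrightarrow> continuous_on UNIV (gradg i)"
    and B_MFCQ: "\<And>y. feasible g m y \<Longrightarrow>
                   \<exists>d. \<forall>i<m. g i y = 0 \<longrightarrow> gradg i y \<bullet> d < 0"
    and c_pos: "c > 0" and Llo_pos: "0 < Llo" and Llo_Lhi: "Llo < Lhi" and tau_gt: "\<tau> > 1"
    and x0_feas: "feasible g m (x 0)"
    and xi_sub: "\<And>t. xi t \<in> subdiff P2 (x t)"
    and step: "\<And>t. scp_ls_step f gradf P1 P2 g gradg m c Llo Lhi \<tau>
                     (x t) (xi t) (Lf t) (Lg t) (x (Suc t))"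
    and mult: "\<And>t. sub_multiplier gradf P1 g gradg m (x t) (xi t) (Lf t) (Lg t)
                     (x (Suc t)) (lam t)"
  shows "(\<exists>B. \<forall>t. \<forall>i<m. \<bar>lam t i\<bar> \<le> B) \<and>
         (\<forall>xbar. (\<exists>r. strict_mono r \<and> (x \<circ> r) \<longlonglongrightarrow> xbar) \<longrightarrow>
                  stationary gradf P1 P2 g gradg m xbar)"
proof -
  interpret scp f P1 P2 gradf g gradg m c Llo Lhi \<tau> x xi Lf Lg lam
    by (rule scp.intro; fact assms)
  show ?thesis by (rule main)
qed

end
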